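(* If $q=2^k$ with $k>1$ then $f(X):=X^{q+2}+bX^q+cX$ does not permute $\mathbb{F}_{q^2}$ for any $b,c\in\mathbb{F}_{q^2}$ with $b\ne 0$. *)

theory Defs
  imports Main
begin

end

theory Submission
  imports Defs "HOL-Computational_Algebra.Polynomial" "HOL-Number_Theory.Cong"
begin

lemma ff_pow_card:
  fixes x :: "'a :: {field, finite}"
  shows "x ^ card (UNIV :: 'a set) = x"
proof (cases "x = 0")
  case False
  have "x * (\<Prod>y\<in>UNIV-{0}. x * y) = x * x ^ (card (UNIV :: 'a set) - 1) * \<Prod>(UNIV-{0})"
    by (simp add: prod.distrib mult_ac)
  also have "x * x ^ (card (UNIV :: 'a set) - 1) = x ^ Suc (card (UNIV :: 'a set) - 1)"
    by (subst power_Suc) auto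
  also have "Suc (card (UNIV :: 'a set) - 1) = card (UNIV :: 'a set)"
    using finite_UNIV_card_ge_0[where ?'a = 'a] by simp
  also have "(\<Prod>y\<in>UNIV-{0}. x * y) = (\<Prod>y\<in>UNIV-{0}. y)"
    by (rule prod.reindex_bij_witness[of _ "\<lambda>y. y / x" "\<lambda>y. x * y"]) (use False in auto)
  finally show ?thesis
    by simp
qed (use finite_UNIV_card_ge_0[where ?'a = 'a] in auto)

lemma ff_pow_card_pow:
  fixes x :: "'a :: {field, finite}"
  shows "x ^ (card (UNIV :: 'a set) ^ n) = x"
  by (induction n) (simp_all add: ff_pow_card power_mult)

lemma ff_char2:
  assumes "even (card (UNIV :: 'a :: {field, finite} set))"
  shows "(2::'a) = 0"
proof -
  have "(-1::'a) ^ card (UNIV :: 'a set) = -1" by (rule ff_pow_card)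
  with assms have "(1::'a) = -1" by simp
  hence "(1::'a) + 1 = 0" by (metis add.right_inverse)
  thus ?thesis by simp
qed

lemma c2_add_self: "(2::'a::comm_ring_1) = 0 \<Longrightarrow> a + a = (0::'a)"
  by (metis mult_2 mult_zero_left)

lemma c2_neg: "(2::'a::comm_ring_1) = 0 \<Longrightarrow> - a = (a::'a)"
  by (metis add_eq_0_iff2 c2_add_self)

lemma c2_eq_iff: "(2::'a::comm_ring_1) = 0 \<Longrightarrow> (a = b) \<longleftrightarrow> a + b = (0::'a)"
  by (metis add_right_cancel c2_add_self)

lemma c2_sq_add: "(2::'a::comm_ring_1) = 0 \<Longrightarrow> (a + b) ^ 2 = a ^ 2 + (b::'a) ^ 2"
proof -
  assume h: "(2::'a) = 0"
  have "(a + b) ^ 2 = a ^ 2 + b ^ 2 + 2 * (a * b)" by (simp add: power2_eq_square algebra_simps)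
  thus ?thesis using h by simp
qed

lemma c2_frob: "(2::'a::comm_ring_1) = 0 \<Longrightarrow> (a + b) ^ (2 ^ n) = a ^ (2 ^ n) + (b::'a) ^ (2 ^ n)"
proof (induction n)
  case 0 then show ?case by simp
next
  case (Suc n)
  have "(a + b) ^ (2 ^ Suc n) = ((a + b) ^ (2 ^ n)) ^ 2" by (simp add: power_mult[symmetric] mult.commute)
  also have "\<dots> = (a ^ (2 ^ n) + b ^ (2 ^ n)) ^ 2" using Suc by simp
  also have "\<dots> = (a ^ (2 ^ n)) ^ 2 + (b ^ (2 ^ n)) ^ 2" using Suc.prems by (rule c2_sq_add)
  also have "\<dots> = a ^ (2 ^ Suc n) + b ^ (2 ^ Suc n)" by (simp add: power_mult[symmetric] mult.commute)
  finally show ?case .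
qed

lemma c2_frob_sum:
  assumes h: "(2::'a::comm_ring_1) = 0" and fin: "finite A"
  shows "(\<Sum>i\<in>A. f i) ^ (2 ^ n) = (\<Sum>i\<in>A. (f i :: 'a) ^ (2 ^ n))"
  using fin
proof (induction A rule: finite_induct)
  case empty then show ?case by (simp add: zero_power)
next
  case (insert x F) then show ?case by (simp add: c2_frob[OF h])
qed

lemma c2_pow_inj: "(2::'a::field) = 0 \<Longrightarrow> a ^ (2 ^ n) = b ^ (2 ^ n) \<Longrightarrow> a = (b::'a)"
proof -
  assume h: "(2::'a) = 0" and e: "a ^ (2 ^ n) = b ^ (2 ^ n)"
  have "(a + b) ^ (2 ^ n) = 0" using c2_frob[OF h, of a b n] e c2_add_self[OF h] by simp
  hence "a + b = 0" by simp
  thus ?thesis using c2_eq_iff[OF h] by blast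
qed

lemma c2_sqrt: "(2::'a::{field,finite}) = 0 \<Longrightarrow> \<exists>s. s ^ 2 = (b::'a)"
proof -
  assume h: "(2::'a) = 0"
  have "inj (\<lambda>x::'a. x ^ 2)" using c2_pow_inj[OF h, of _ 1] by (intro injI) auto
  hence "surj (\<lambda>x::'a. x ^ 2)" using finite_UNIV_inj_surj[of "\<lambda>x::'a. x ^ 2"] by simp
  then obtain s where "b = s ^ 2" by (meson surjD)
  thus ?thesis by blast
qed

lemma roots_bound:
  fixes p :: "'a::field poly"
  assumes "degree p < n"
  shows "card {x::'a. x ^ n = poly p x} \<le> n"
proof -
  have ne: "monom 1 n - p \<noteq> 0"
  proof
    assume "monom 1 n - p = 0"
    hence "monom 1 n = p" by simp
    hence "degree p = n" by (metis degree_monom_eq one_neq_zero)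
    with assms show False by simp
  qed
  have deg: "degree (monom 1 n - p) = n"
  proof -
    have "monom 1 n - p = monom 1 n + (- p)" by simp
    also have "degree \<dots> = n"
      using assms by (subst degree_add_eq_left) (simp_all add: degree_monom_eq)
    finally show ?thesis .
  qed
  have "{x::'a. x ^ n = poly p x} = {x. poly (monom 1 n - p) x = 0}"
    by (simp add: poly_monom)
  thus ?thesis using card_poly_roots_bound[OF ne] deg by simp
qed

lemma collision:
  fixes c w z :: "'a::field"
  assumes h2: "(2::'a) = 0" and q: "q = 2 ^ k" and w: "w \<noteq> 0"
    and eq: "z ^ q + z ^ 2 = 1 + w ^ 2 + c * w ^ (q + 1)"
  shows "(z/w + 1/w) ^ (q + 2) + (z/w + 1/w) ^ q + c * (z/w + 1/w)
       = (z/w) ^ (q + 2) + (z/w) ^ q + c * (z/w)"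
proof -
  define y where "y = 1 / w"
  define x where "x = z * y"
  have yw: "y * w = 1" using w by (simp add: y_def)
  have zw: "z / w = x" by (simp add: x_def y_def)
  have fq: "(x + y) ^ q = x ^ q + y ^ q" using c2_frob[OF h2, of x y k] q by simp
  have f2: "(x + y) ^ 2 = x ^ 2 + y ^ 2" using c2_sq_add[OF h2] .
  have yq2: "y ^ (q + 2) * w ^ 2 = y ^ q"
    by (metis power_add power_mult_distrib yw mult.assoc mult_1_right power_one)
  have yq1: "y ^ (q + 2) * w ^ (q + 1) = y"
  proof -
    have "y ^ (q + 2) * w ^ (q + 1) = y * (y * w) ^ (q + 1)"
      by (simp add: power_mult_distrib power_add algebra_simps)
    thus ?thesis using yw by simp
  qed
  have "((x + y) ^ (q + 2) + (x + y) ^ q + c * (x + y)) + (x ^ (q + 2) + x ^ q + c * x)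
      = (x ^ q + y ^ q) * (x ^ 2 + y ^ 2) + x ^ q * x ^ 2 + y ^ q + c * y
        + 2 * (x ^ q + c * x)"
  proof -
    have e1: "(x + y) ^ (q + 2) = (x ^ q + y ^ q) * (x ^ 2 + y ^ 2)"
      by (simp only: power_add fq f2)
    have e2: "x ^ (q + 2) = x ^ q * x ^ 2" by (simp only: power_add)
    show ?thesis unfolding e1 e2 fq by (simp add: algebra_simps)
  qed
  also have "\<dots> = (x ^ q + y ^ q) * (x ^ 2 + y ^ 2) + x ^ q * x ^ 2 + y ^ q + c * y"
    using h2 by simp
  also have "\<dots> = y ^ q * y ^ 2 * (z ^ q + z ^ 2) + y ^ q * y ^ 2 + y ^ q + c * y + 2 * (x ^ q * x ^ 2)"
    by (simp add: x_def power_mult_distrib algebra_simps)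
  also have "\<dots> = y ^ (q + 2) * (z ^ q + z ^ 2) + y ^ (q + 2) + y ^ (q + 2) * w ^ 2 + c * (y ^ (q + 2) * w ^ (q + 1))"
  proof -
    have A: "y ^ q * y ^ 2 = y ^ (q + 2)" by (simp only: power_add)
    show ?thesis using h2 by (simp only: A yq2 yq1 mult_zero_left add_0_right)
  qed
  also have "\<dots> = y ^ (q + 2) * ((z ^ q + z ^ 2) + (1 + w ^ 2 + c * w ^ (q + 1)))"
    by (simp add: algebra_simps)
  also have "\<dots> = 0" using eq h2 c2_add_self[OF h2] by simp
  finally have "((x + y) ^ (q + 2) + (x + y) ^ q + c * (x + y)) + (x ^ (q + 2) + x ^ q + c * x) = 0" .
  hence "(x + y) ^ (q + 2) + (x + y) ^ q + c * (x + y) = x ^ (q + 2) + x ^ q + c * x"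
    using c2_eq_iff[OF h2] by blast
  thus ?thesis by (simp add: zw y_def)
qed


lemma card_fibers:
  assumes "finite A"
  shows "card A = (\<Sum>v\<in>f ` A. card {x\<in>A. f x = v})"
proof -
  have "A = (\<Union>v\<in>f ` A. {x\<in>A. f x = v})" by auto
  hence "card A = card (\<Union>v\<in>f ` A. {x\<in>A. f x = v})" by simp
  also have "\<dots> = (\<Sum>v\<in>f ` A. card {x\<in>A. f x = v})"
    by (rule card_UN_disjoint) (use assms in auto)
  finally show ?thesis .
qed

lemma omega_exists:
  assumes h2: "(2::'a::{field,finite}) = 0" and Q: "card (UNIV :: 'a set) = 4 ^ k" and k: "k \<ge> 1"
  shows "\<exists>\<omega>::'a. \<omega> ^ 2 + \<omega> + 1 = 0"
proof -
  have "[4 ^ k = 1 ^ k] (mod 3::nat)" by (intro cong_pow) (simp add: cong_def)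
  hence "(4::nat) ^ k mod 3 = 1" by (simp add: cong_def)
  hence "3 dvd (4::nat) ^ k - 1" by (metis dvd_minus_mod minus_mod_eq_mult_div)
  then obtain d where d: "(4::nat) ^ k - 1 = 3 * d" by blast
  have "(4::nat) ^ k \<ge> 4 ^ 1" using k by (intro power_increasing) auto
  hence dpos: "d > 0" and dlt: "d < 4 ^ k - 1" using d by auto
  have "\<exists>x::'a. x \<noteq> 0 \<and> x ^ d \<noteq> 1"
  proof (rule ccontr)
    assume "\<not> ?thesis"
    hence "UNIV - {0} \<subseteq> {x::'a. x ^ d = poly [:1:] x}" by auto
    hence "card (UNIV - {0::'a}) \<le> card {x::'a. x ^ d = poly [:1:] x}"
      by (intro card_mono) (auto intro: finite_subset)
    also have "\<dots> \<le> d" using dpos by (intro roots_bound) simp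
    finally have "4 ^ k - 1 \<le> d" using Q by (simp add: card_Diff_singleton)
    with dlt show False by simp
  qed
  then obtain x :: 'a where x0: "x \<noteq> 0" and xd: "x ^ d \<noteq> 1" by blast
  have "x ^ (4 ^ k) = x" using ff_pow_card[of x] Q by simp
  hence "x * x ^ (4 ^ k - 1) = x * 1"
    by (metis Suc_pred' power_Suc mult_1_right neq0_conv power_eq_0_iff zero_neq_numeral)
  hence "x ^ (4 ^ k - 1) = 1" using x0 by simp
  hence o3: "(x ^ d) ^ 3 = 1" using d by (simp add: power_mult[symmetric] mult.commute)
  have "(x ^ d - 1) * ((x ^ d) ^ 2 + x ^ d + 1) = (x ^ d) ^ 3 - 1"
    by (simp add: algebra_simps power2_eq_square power3_eq_cube)
  hence "(x ^ d - 1) * ((x ^ d) ^ 2 + x ^ d + 1) = 0" using o3 by simp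
  hence "(x ^ d) ^ 2 + x ^ d + 1 = 0" using xd by simp
  thus ?thesis by blast
qed


definition tr4 :: "nat \<Rightarrow> 'a::field \<Rightarrow> 'a" where
  "tr4 k a = (\<Sum>i<k. a ^ (4 ^ i))"

lemma four_pow: "(4::nat) ^ i = 2 ^ (2 * i)"
  by (simp add: power_mult)

locale oddcase =
  fixes k m :: nat and \<omega> :: "'a::{field,finite}"
  assumes h2: "(2::'a) = 0" and Q: "card (UNIV :: 'a set) = 4 ^ k"
    and km: "k = 2 * m + 1" and m1: "m \<ge> 1" and om: "\<omega> ^ 2 + \<omega> + 1 = 0"
begin

abbreviation tr where "tr \<equiv> tr4 k :: 'a \<Rightarrow> 'a"

lemma pow4k: "x ^ (4 ^ k) = (x::'a)"
  using ff_pow_card[of x] Q by simp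

lemma pow4i_add: "(a + b) ^ (4 ^ i) = a ^ (4 ^ i) + (b::'a) ^ (4 ^ i)"
  unfolding four_pow by (rule c2_frob[OF h2])

lemma tr_add: "tr (a + b) = tr a + tr b"
  unfolding tr4_def by (simp add: pow4i_add sum.distrib)

lemma tr_4: "tr (a ^ 4) = tr a"
proof -
  have e: "(a ^ 4) ^ (4 ^ i) = a ^ (4 ^ Suc i)" for i
    by (simp add: power_mult[symmetric] mult.commute)
  have "(\<Sum>i<Suc k. a ^ (4 ^ i)) = a + (\<Sum>i<k. a ^ (4 ^ Suc i))"
    by (subst sum.lessThan_Suc_shift) simp
  moreover have "(\<Sum>i<Suc k. a ^ (4 ^ i)) = (\<Sum>i<k. a ^ (4 ^ i)) + a"
    using pow4k by simp
  ultimately have "(\<Sum>i<k. a ^ (4 ^ Suc i)) = (\<Sum>i<k. a ^ (4 ^ i))"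
    by (metis add.commute add_right_cancel)
  thus ?thesis unfolding tr4_def e .
qed

lemma tr_4pow: "tr (a ^ (4 ^ n)) = tr a"
proof (induction n)
  case 0 then show ?case by simp
next
  case (Suc n)
  have "a ^ (4 ^ Suc n) = (a ^ (4 ^ n)) ^ 4" by (simp add: power_mult[symmetric] mult.commute)
  then show ?case using Suc tr_4 by simp
qed

lemma tr_sq: "tr (a ^ 2) = (tr a) ^ 2"
proof -
  have "(tr a) ^ 2 = (tr a) ^ (2 ^ 1)" by simp
  also have "\<dots> = (\<Sum>i<k. (a ^ (4 ^ i)) ^ (2 ^ 1))"
    unfolding tr4_def by (rule c2_frob_sum[OF h2]) simp
  also have "\<dots> = tr (a ^ 2)"
    unfolding tr4_def by (simp add: power_mult[symmetric] mult.commute)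
  finally show ?thesis by simp
qed

lemma F4_pow: "l ^ 4 = l \<Longrightarrow> l ^ (4 ^ i) = (l::'a)"
proof (induction i)
  case 0 then show ?case by simp
next
  case (Suc i)
  have "l ^ (4 ^ Suc i) = (l ^ (4 ^ i)) ^ 4" by (simp add: power_mult[symmetric] mult.commute)
  then show ?case using Suc by simp
qed

lemma tr_scale: "l ^ 4 = l \<Longrightarrow> tr (l * a) = l * tr a"
  unfolding tr4_def by (simp add: power_mult_distrib F4_pow sum_distrib_left)

lemma tr_one: "tr 1 = 1"
proof -
  have "tr 1 = of_nat k" unfolding tr4_def by simp
  also have "\<dots> = 2 * of_nat m + 1" using km by simp
  finally show ?thesis using h2 by simp
qed

lemma tr_pow4: "(tr a) ^ 4 = tr a"
proof -
  have "(tr a) ^ 4 = ((tr a) ^ 2) ^ 2" by simp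
  also have "\<dots> = tr (a ^ 4)" using tr_sq by (metis power_mult num_double numeral_times_numeral)
  finally show ?thesis using tr_4 by simp
qed

lemma tr_zero: "tr 0 = 0"
  unfolding tr4_def by (simp add: zero_power)

lemma tr_ker_card: "card {a. tr a = 0} \<le> 4 ^ (k - 1)"
proof -
  define p :: "'a poly" where "p = (\<Sum>i<k-1. monom 1 (4 ^ i))"
  have dp: "degree p < 4 ^ (k - 1)"
  proof -
    have "degree p \<le> 4 ^ (k - 1) - 1"
      unfolding p_def
    proof (rule degree_sum_le)
      fix i assume "i \<in> {..<k-1}"
      hence "(4::nat) ^ i < 4 ^ (k - 1)" by (intro power_strict_increasing) auto
      moreover have "degree (monom (1::'a) (4 ^ i)) = 4 ^ i" by (simp add: degree_monom_eq)
      ultimately show "degree (monom (1::'a) (4 ^ i)) \<le> 4 ^ (k - 1) - 1" by linarith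
    qed simp
    thus ?thesis by (metis diff_less le_less_trans pos2 zero_less_numeral zero_less_power le_imp_less_Suc Suc_pred')
  qed
  have "{a. tr a = 0} \<subseteq> {x. x ^ (4 ^ (k - 1)) = poly p x}"
  proof
    fix a assume "a \<in> {a. tr a = 0}"
    hence "tr a = 0" by simp
    moreover have "tr a = (\<Sum>i<k-1. a ^ (4 ^ i)) + a ^ (4 ^ (k - 1))"
      unfolding tr4_def using km by (metis Suc_diff_1 add_gr_0 sum.lessThan_Suc zero_less_one)
    ultimately have "a ^ (4 ^ (k - 1)) = (\<Sum>i<k-1. a ^ (4 ^ i))"
      using c2_eq_iff[OF h2] by (metis add.commute)
    thus "a \<in> {x. x ^ (4 ^ (k - 1)) = poly p x}" by (simp add: p_def poly_sum poly_monom)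
  qed
  hence "card {a. tr a = 0} \<le> card {x. x ^ (4 ^ (k - 1)) = poly p x}"
    by (intro card_mono) auto
  also have "\<dots> \<le> 4 ^ (k - 1)" by (rule roots_bound[OF dp])
  finally show ?thesis .
qed



end

context oddcase begin
abbreviation M where "M \<equiv> (\<lambda>z::'a. z ^ (2 * 4 ^ m) + z ^ 2)"

lemma qpow: "(2::nat) * 4 ^ m = 2 ^ (2 * m + 1)"
  by (simp add: power_mult power_add)

lemma M_add: "M (a + b) = M a + M b"
proof -
  have "(a + b) ^ (2 * 4 ^ m) = a ^ (2 * 4 ^ m) + b ^ (2 * 4 ^ m)"
    unfolding qpow by (rule c2_frob[OF h2])
  moreover have "(a + b) ^ 2 = a ^ 2 + b ^ 2" by (rule c2_sq_add[OF h2])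
  ultimately show ?thesis by (simp add: algebra_simps)
qed

lemma tr_M: "tr (M z) = 0"
proof -
  have "z ^ (2 * 4 ^ m) = (z ^ (4 ^ m)) ^ 2" by (simp add: power_mult[symmetric] mult.commute)
  hence "tr (z ^ (2 * 4 ^ m)) = tr (z ^ 2)" using tr_sq tr_4pow by simp
  thus ?thesis using tr_add c2_add_self[OF h2] by simp
qed

lemma M_ker: assumes "M z = 0" shows "z ^ 4 = z"
proof -
  have "z ^ (2 * 4 ^ m) = z ^ 2" using assms c2_eq_iff[OF h2] by blast
  hence "(z ^ (4 ^ m)) ^ (2 ^ 1) = z ^ (2 ^ 1)" by (simp add: power_mult[symmetric] mult.commute)
  hence e1: "z ^ (4 ^ m) = z" by (rule c2_pow_inj[OF h2])
  have "z ^ (4 ^ (2 * m)) = (z ^ (4 ^ m)) ^ (4 ^ m)" by (simp add: power_mult[symmetric] power_add mult_2)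
  hence e2: "z ^ (4 ^ (2 * m)) = z" using e1 by simp
  have "z = z ^ (4 ^ k)" using pow4k by simp
  also have "\<dots> = (z ^ (4 ^ (2 * m))) ^ 4" using km by (simp add: power_mult[symmetric] mult.commute)
  finally show ?thesis using e2 by simp
qed

lemma M_fiber: "card {x. M x = v} \<le> 4"
proof (cases "\<exists>z0. M z0 = v")
  case False
  hence "{x. M x = v} = {}" by auto
  then show ?thesis by simp
next
  case True
  then obtain z0 where z0: "M z0 = v" by blast
  have "{x. M x = v} \<subseteq> (\<lambda>u. z0 + u) ` {u::'a. u ^ 4 = u}"
  proof
    fix x assume "x \<in> {x. M x = v}"
    hence "M x = M z0" using z0 by simp
    hence "M (x + z0) = M z0 + M z0" using M_add[of x z0] by simp
    hence "M (x + z0) = 0" using c2_add_self[OF h2, of "M z0"] by simp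
    hence "(x + z0) ^ 4 = x + z0" by (rule M_ker)
    moreover have "x = z0 + (x + z0)" using c2_add_self[OF h2, of z0] by (simp add: algebra_simps)
    ultimately show "x \<in> (\<lambda>u. z0 + u) ` {u::'a. u ^ 4 = u}" by force
  qed
  hence "card {x. M x = v} \<le> card ((\<lambda>u. z0 + u) ` {u::'a. u ^ 4 = u})"
    by (intro card_mono) auto
  also have "\<dots> \<le> card {u::'a. u ^ 4 = u}" by (simp add: card_image inj_on_def)
  also have "\<dots> \<le> 4"
  proof -
    have "{u::'a. u ^ 4 = u} = {u. u ^ 4 = poly [:0, 1:] u}" by simp
    thus ?thesis using roots_bound[of "[:0, 1::'a:]" 4] by simp
  qed
  finally show ?thesis .
qed

lemma M_image: "{a. tr a = 0} = range M" and ker_card: "card {a. tr a = 0} = 4 ^ (k - 1)"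
proof -
  have "card (UNIV :: 'a set) = (\<Sum>v\<in>range M. card {x\<in>UNIV. M x = v})"
    by (rule card_fibers) simp
  also have "\<dots> \<le> (\<Sum>v\<in>range M. 4)" using M_fiber by (intro sum_mono) simp
  finally have "4 ^ k \<le> 4 * card (range M)" using Q by simp
  moreover have "(4::nat) ^ k = 4 * 4 ^ (k - 1)" using km by simp
  ultimately have c1: "4 ^ (k - 1) \<le> card (range M)" by linarith
  have sub: "range M \<subseteq> {a. tr a = 0}" using tr_M by auto
  have "card (range M) \<le> card {a. tr a = 0}" using sub by (intro card_mono) auto
  hence ceq: "card (range M) = card {a. tr a = 0}" using c1 tr_ker_card by simp
  show "{a. tr a = 0} = range M"
    using card_subset_eq[OF _ sub ceq] by simp
  show "card {a. tr a = 0} = 4 ^ (k - 1)" using ceq c1 tr_ker_card by simp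
qed


lemma om3: "\<omega> ^ 3 = 1"
proof -
  have "\<omega> ^ 3 - 1 = (\<omega> - 1) * (\<omega> ^ 2 + \<omega> + 1)"
    by (simp add: algebra_simps power2_eq_square power3_eq_cube)
  thus ?thesis using om by simp
qed

lemma om4: "\<omega> ^ 4 = \<omega>"
proof -
  have "\<omega> ^ 4 = \<omega> ^ 3 * \<omega>" by (simp add: power3_eq_cube power4_eq_xxxx)
  thus ?thesis using om3 by simp
qed

lemma om_ne0: "\<omega> \<noteq> 0" using om by auto

lemma om_sum: "\<omega> + \<omega> ^ 2 = 1"
proof -
  have "\<omega> ^ 2 + \<omega> = - 1" using om by (simp add: eq_neg_iff_add_eq_0)
  thus ?thesis using c2_neg[OF h2, of 1] by (simp add: add.commute)
qed

abbreviation qq where "qq \<equiv> (2::nat) * 4 ^ m"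

lemma om_qq: "\<omega> ^ qq = \<omega> ^ 2"
proof -
  have "\<omega> ^ qq = (\<omega> ^ (4 ^ m)) ^ 2" by (simp add: power_mult[symmetric] mult.commute)
  thus ?thesis using F4_pow[OF om4] by simp
qed

lemma om_qq1: "\<omega> ^ (qq + 1) = 1"
proof -
  have "\<omega> ^ (qq + 1) = \<omega> ^ 2 * \<omega>" using om_qq by (simp add: power_add)
  also have "\<dots> = \<omega> ^ 3" by (simp add: power2_eq_square power3_eq_cube)
  finally show ?thesis using om3 by simp
qed

lemma F4_cases:
  assumes "x ^ 4 = x"
  shows "x = 0 \<or> x = 1 \<or> x = \<omega> \<or> x = \<omega> ^ 2"
proof -
  have e1: "(x + \<omega>) * (x + \<omega> ^ 2) = x ^ 2 + (\<omega> + \<omega> ^ 2) * x + \<omega> ^ 3"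
    by (simp add: algebra_simps power2_eq_square power3_eq_cube)
  hence e1': "(x + \<omega>) * (x + \<omega> ^ 2) = x ^ 2 + x + 1" using om_sum om3 by simp
  have "x * (x + 1) * (x ^ 2 + x + 1) = x ^ 4 + x + 2 * (x ^ 3 + x ^ 2)"
    by (simp add: algebra_simps power2_eq_square power3_eq_cube power4_eq_xxxx)
  also have "\<dots> = x + x" using assms h2 by simp
  also have "\<dots> = 0" by (rule c2_add_self[OF h2])
  finally have "x * (x + 1) * ((x + \<omega>) * (x + \<omega> ^ 2)) = 0" using e1' by simp
  hence "x = 0 \<or> x + 1 = 0 \<or> x + \<omega> = 0 \<or> x + \<omega> ^ 2 = 0" by auto
  thus ?thesis using c2_eq_iff[OF h2] by metis
qed

lemma qq_sq: "qq * qq = 4 ^ k"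
proof -
  have a: "(4::nat) ^ (2 * m) = 4 ^ m * 4 ^ m" by (simp add: mult_2 power_add)
  have b: "(4::nat) ^ k = 4 * 4 ^ (2 * m)" using km by simp
  show ?thesis using a b by simp
qed

lemma N_fix: "(w ^ (qq + 1)) ^ qq = (w::'a) ^ (qq + 1)"
proof -
  have "(w ^ (qq + 1)) ^ qq = w ^ (qq * qq) * w ^ qq"
    by (simp add: power_mult[symmetric] power_add algebra_simps)
  also have "\<dots> = w * w ^ qq" using qq_sq pow4k by simp
  finally show ?thesis by (simp add: power_add mult.commute)
qed

lemma qq_ge: "qq \<ge> 8"
proof -
  have "(4::nat) ^ m \<ge> 4 ^ 1" using m1 by (intro power_increasing) auto
  thus ?thesis by simp
qed

lemma N_fiber_eq:
  assumes "w0 \<noteq> 0"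
  shows "card {w::'a. w ^ (qq + 1) = w0 ^ (qq + 1)} = qq + 1"
proof (rule ccontr)
  assume ne: "\<not> ?thesis"
  define N where "N = (\<lambda>w::'a. w ^ (qq + 1))"
  define A where "A = UNIV - {0::'a}"
  have fibA: "{x\<in>A. N x = l} = {w. N w = l}" if "l \<in> N ` A" for l
    using that by (auto simp: A_def N_def)
  have fle: "card {w. N w = l} \<le> qq + 1" if "l \<in> N ` A" for l
  proof -
    have "{w. N w = l} = {w. w ^ (qq + 1) = poly [:l:] w}" by (simp add: N_def)
    thus ?thesis using roots_bound[of "[:l:]" "qq + 1"] by simp
  qed
  have IA: "N ` A \<subseteq> {l. l ^ qq = poly [:0, 1:] l} - {0}"
    using N_fix by (auto simp: A_def N_def)
  have "card (N ` A) \<le> card ({l::'a. l ^ qq = poly [:0, 1:] l} - {0})"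
    using IA by (intro card_mono) auto
  also have "\<dots> = card {l::'a. l ^ qq = poly [:0, 1:] l} - 1"
    using qq_ge by (intro card_Diff_singleton) (auto simp: zero_power)
  also have "card {l::'a. l ^ qq = poly [:0, 1:] l} \<le> qq"
    using qq_ge by (intro roots_bound) auto
  finally have cI: "card (N ` A) \<le> qq - 1" by simp
  have w0A: "N w0 \<in> N ` A" using assms by (simp add: A_def)
  have "card A = (\<Sum>l\<in>N ` A. card {x\<in>A. N x = l})"
    by (rule card_fibers) simp
  also have "\<dots> = (\<Sum>l\<in>N ` A. card {x. N x = l})"
    using fibA by (intro sum.cong) auto
  also have "\<dots> < (\<Sum>l\<in>N ` A. qq + 1)"
  proof (rule sum_strict_mono_ex1)
    show "\<forall>x\<in>N ` A. card {xa. N xa = x} \<le> qq + 1" using fle by blast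
    have "card {x. N x = N w0} < qq + 1" using fle[OF w0A] ne by (simp add: N_def)
    thus "\<exists>a\<in>N ` A. card {x. N x = a} < qq + 1" using w0A by blast
  qed simp
  also have "\<dots> = card (N ` A) * (qq + 1)" by simp
  also have "\<dots> \<le> (qq - 1) * (qq + 1)" using cI by (intro mult_right_mono) auto
  also have "\<dots> = qq * qq - 1" using qq_ge by (simp add: algebra_simps)
  finally have "card A < 4 ^ k - 1" using qq_sq by simp
  moreover have "card A = 4 ^ k - 1" using Q by (simp add: A_def card_Diff_singleton)
  ultimately show False by simp
qed


lemma tr_H: fixes c w :: 'a shows "tr (1 + w ^ 2 + c * w ^ (qq + 1)) = 1 + (tr w) ^ 2 + tr (c * w ^ (qq + 1))"
  using tr_add tr_one tr_sq by simp

lemma om2_4: "(\<omega> ^ 2) ^ 4 = \<omega> ^ 2"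
  by (metis om4 power_mult mult.commute)

lemma N_om: fixes w :: 'a shows "(\<omega> * w) ^ (qq + 1) = w ^ (qq + 1)" "(\<omega> ^ 2 * w) ^ (qq + 1) = w ^ (qq + 1)"
proof -
  show "(\<omega> * w) ^ (qq + 1) = w ^ (qq + 1)" using om_qq1 by (simp add: power_mult_distrib)
  have "(\<omega> ^ 2) ^ (qq + 1) = (\<omega> ^ (qq + 1)) ^ 2" by (metis power_mult mult.commute)
  hence P: "(\<omega> ^ 2) ^ (qq + 1) = 1" using om_qq1 by simp
  have F: "(\<omega> ^ 2 * w) ^ (qq + 1) = (\<omega> ^ 2) ^ (qq + 1) * w ^ (qq + 1)" by (rule power_mult_distrib)
  show "(\<omega> ^ 2 * w) ^ (qq + 1) = w ^ (qq + 1)" by (simp only: F P mult_1_left)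
qed

lemma claim1_lemma:
  fixes c w :: 'a
  assumes H: "\<And>w. 1 + (tr w) ^ 2 + tr (c * w ^ (qq + 1)) \<noteq> 0" and tw: "tr w \<noteq> 0"
  shows "tr (c * w ^ (qq + 1)) = 1"
proof (rule ccontr)
  assume C1: "tr (c * w ^ (qq + 1)) \<noteq> 1"
  define C where "C = tr (c * w ^ (qq + 1))"
  define A where "A = (tr w) ^ 2"
  have A0: "A \<noteq> 0" using tw by (simp add: A_def)
  have "((tr w) ^ 2) ^ 4 = ((tr w) ^ 4) ^ 2" by (simp only: power_mult[symmetric]) simp
  hence A4: "A ^ 4 = A" unfolding A_def by (simp only: tr_pow4)
  have C4: "C ^ 4 = C" unfolding C_def by (rule tr_pow4)
  have C1': "1 + C \<noteq> 0"
  proof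
    assume "1 + C = 0"
    hence "1 = C" using c2_eq_iff[OF h2] by blast
    thus False using C1 by (simp add: C_def)
  qed
  define D where "D = (1 + C) / A"
  have "(1 + C) ^ (2 ^ 2) = 1 ^ (2 ^ 2) + C ^ (2 ^ 2)" by (rule c2_frob[OF h2])
  hence P4: "(1 + C) ^ 4 = 1 + C" using C4 by simp
  have "D ^ 4 = (1 + C) ^ 4 / A ^ 4" by (simp only: D_def power_divide)
  hence D4: "D ^ 4 = D" by (simp only: P4 A4 D_def)
  have D0: "D \<noteq> 0" using A0 C1' by (simp add: D_def)
  have DA: "1 + C = D * A" using A0 by (simp add: D_def)
  have Hw: "1 + l * A + C \<noteq> 0" if "tr (v :: 'a) ^ 2 = l * A" "v ^ (qq + 1) = w ^ (qq + 1)" for l v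
  proof -
    have "1 + (tr v) ^ 2 + tr (c * v ^ (qq + 1)) \<noteq> 0" by (rule H)
    thus ?thesis by (simp only: that C_def not_False_eq_True)
  qed
  have H1: "1 + 1 * A + C \<noteq> 0" by (rule Hw[of w]) (simp_all add: A_def)
  have H2: "1 + \<omega> ^ 2 * A + C \<noteq> 0"
  proof (rule Hw[of "\<omega> * w"])
    show "tr (\<omega> * w) ^ 2 = \<omega> ^ 2 * A"
      by (simp only: tr_scale[OF om4] A_def power_mult_distrib)
    show "(\<omega> * w) ^ (qq + 1) = w ^ (qq + 1)" by (rule N_om(1))
  qed
  have H3: "1 + \<omega> * A + C \<noteq> 0"
  proof (rule Hw[of "\<omega> ^ 2 * w"])
    have e: "(\<omega> ^ 2) ^ 2 = \<omega>" using om4 by (simp add: power_mult[symmetric])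
    show "tr (\<omega> ^ 2 * w) ^ 2 = \<omega> * A"
      by (simp only: tr_scale[OF om2_4] A_def power_mult_distrib e)
    show "(\<omega> ^ 2 * w) ^ (qq + 1) = w ^ (qq + 1)" by (rule N_om(2))
  qed
  have Dc: "D = 1 \<or> D = \<omega> \<or> D = \<omega> ^ 2" using F4_cases[OF D4] D0 by blast
  have "1 + D * A + C \<noteq> 0" using Dc H1 H2 H3 by auto
  moreover have "1 + D * A + C = D * A + D * A" using DA by (simp add: algebra_simps)
  moreover have "D * A + D * A = 0" by (rule c2_add_self[OF h2])
  ultimately show False by simp
qed

lemma odd_exists_tr: fixes c :: 'a shows "\<exists>w. tr (1 + w ^ 2 + c * w ^ (qq + 1)) = 0"
proof (rule ccontr)
  assume nex: "\<not> ?thesis"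
  hence H: "\<And>w. 1 + (tr w) ^ 2 + tr (c * w ^ (qq + 1)) \<noteq> 0" using tr_H by metis
  have claim1: "tr (c * w ^ (qq + 1)) = 1" if tw: "tr w \<noteq> 0" for w
    using claim1_lemma[OF H tw] .
  have claim2: "tr w \<noteq> 0" if "tr (c * w ^ (qq + 1)) = 1" for w
  proof
    assume "tr w = 0"
    hence "1 + (tr w) ^ 2 + tr (c * w ^ (qq + 1)) = 1 + 1" using that by simp
    thus False using H[of w] c2_add_self[OF h2] by simp
  qed
  define S where "S = {w::'a. tr (c * w ^ (qq + 1)) = 1}"
  define N where "N = (\<lambda>w::'a. w ^ (qq + 1))"
  have S_eq: "S = UNIV - {a. tr a = 0}" using claim1 claim2 by (auto simp: S_def)
  have cS: "card S = 3 * 4 ^ (k - 1)"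
  proof -
    have "card S = 4 ^ k - 4 ^ (k - 1)" unfolding S_eq using Q ker_card
      by (simp add: card_Diff_subset)
    moreover have "(4::nat) ^ k = 4 * 4 ^ (k - 1)" using km by simp
    ultimately show ?thesis by simp
  qed
  have S0: "w \<in> S \<Longrightarrow> w \<noteq> 0" for w
    using tr_zero by (auto simp: S_def zero_power)
  have "card S = (\<Sum>l\<in>N ` S. card {x\<in>S. N x = l})" by (rule card_fibers) simp
  also have "\<dots> = (\<Sum>l\<in>N ` S. qq + 1)"
  proof (rule sum.cong)
    fix l assume "l \<in> N ` S"
    then obtain w0 where w0: "w0 \<in> S" "l = N w0" by blast
    have "{x\<in>S. N x = l} = {x. x ^ (qq + 1) = w0 ^ (qq + 1)}"
      using w0 by (auto simp: S_def N_def)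
    thus "card {x\<in>S. N x = l} = qq + 1" using N_fiber_eq S0[OF w0(1)] by simp
  qed simp
  also have "\<dots> = card (N ` S) * (qq + 1)" by simp
  finally have dv: "qq + 1 dvd 3 * 4 ^ (k - 1)" using cS by (metis dvd_triv_right)
  have "coprime (qq + 1) 2" by simp
  hence "coprime (qq + 1) (2 ^ (2 * (k - 1)))" by (simp add: coprime_power_right_iff)
  hence "coprime (qq + 1) (4 ^ (k - 1))" by (simp add: power_mult)
  hence "qq + 1 dvd 3" using dv by (simp add: coprime_dvd_mult_left_iff)
  hence "qq + 1 \<le> 3" by (rule dvd_imp_le) simp
  thus False using qq_ge by simp
qed

lemma odd_main: fixes c :: 'a shows "\<exists>w z. w \<noteq> 0 \<and> z ^ qq + z ^ 2 = 1 + w ^ 2 + c * w ^ (qq + 1)"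
proof -
  obtain w where w: "tr (1 + w ^ 2 + c * w ^ (qq + 1)) = 0" using odd_exists_tr by blast
  have "1 + w ^ 2 + c * w ^ (qq + 1) \<in> range M" using w unfolding M_image[symmetric] by simp
  then obtain z where z: "1 + w ^ 2 + c * w ^ (qq + 1) = M z" by (rule rangeE)
  have "w \<noteq> 0"
  proof
    assume "w = 0"
    hence "1 + w ^ 2 + c * w ^ (qq + 1) = 1" by (simp add: zero_power)
    hence "tr (1 + w ^ 2 + c * w ^ (qq + 1)) = tr 1" by (rule arg_cong)
    hence "tr (1 + w ^ 2 + c * w ^ (qq + 1)) = 1" using tr_one by (simp only:)
    thus False using w by simp
  qed
  moreover have "z ^ qq + z ^ 2 = 1 + w ^ 2 + c * w ^ (qq + 1)" using z by (rule sym)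
  ultimately show ?thesis by blast
qed

end


lemma om_pow4: "(\<omega>::'a::field) ^ 2 + \<omega> + 1 = 0 \<Longrightarrow> \<omega> ^ 4 = \<omega>"
proof -
  assume om: "\<omega> ^ 2 + \<omega> + 1 = 0"
  have "\<omega> ^ 4 - \<omega> = \<omega> * (\<omega> - 1) * (\<omega> ^ 2 + \<omega> + 1)"
    by (simp add: algebra_simps power2_eq_square power3_eq_cube power4_eq_xxxx)
  thus ?thesis using om by simp
qed

lemma pow4_iter: "(l::'a::field) ^ 4 = l \<Longrightarrow> l ^ (4 ^ i) = l"
proof (induction i)
  case 0 then show ?case by simp
next
  case (Suc i)
  have "l ^ (4 ^ Suc i) = (l ^ (4 ^ i)) ^ 4" by (simp add: power_mult[symmetric] mult.commute)
  then show ?case using Suc by simp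
qed

lemma main_b1:
  fixes c :: "'a::{field,finite}"
  assumes h2: "(2::'a) = 0" and Q: "card (UNIV :: 'a set) = 4 ^ k" and k: "k > 1" and q: "q = 2 ^ k"
  shows "\<exists>x y. x \<noteq> y \<and> x ^ (q + 2) + x ^ q + c * x = y ^ (q + 2) + y ^ q + c * y"
proof (cases "c = 0")
  case True
  have "(1::'a) ^ (q + 2) + 1 ^ q + c * 1 = 0 ^ (q + 2) + 0 ^ q + c * 0"
    using True q c2_add_self[OF h2, of 1] by (simp add: zero_power)
  thus ?thesis by (metis zero_neq_one)
next
  case c0: False
  have suff: "\<exists>w z. w \<noteq> 0 \<and> z ^ q + z ^ 2 = 1 + w ^ 2 + c * w ^ (q + 1)"
  proof -
    obtain \<omega> :: 'a where om: "\<omega> ^ 2 + \<omega> + 1 = 0" using omega_exists[OF h2 Q] k by auto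
    show ?thesis
    proof (cases "even k")
      case True
      then obtain j where j: "k = 2 * j" by blast
      have qj: "q = 4 ^ j" using q j by (simp add: power_mult)
      have omq: "\<omega> ^ q = \<omega>" using pow4_iter[OF om_pow4[OF om]] qj by simp
      have oms: "\<omega> + \<omega> ^ 2 = 1"
      proof -
        have "\<omega> ^ 2 + \<omega> = - 1" using om by (simp add: eq_neg_iff_add_eq_0)
        thus ?thesis using c2_neg[OF h2, of 1] by (simp add: add.commute)
      qed
      define w where "w = 1 / c"
      define z where "z = w + \<omega>"
      have w0: "w \<noteq> 0" using c0 by (simp add: w_def)
      have cw: "c * w = 1" using c0 by (simp add: w_def)
      have "z ^ q = w ^ q + \<omega> ^ q" unfolding z_def q by (rule c2_frob[OF h2])
      moreover have "z ^ 2 = w ^ 2 + \<omega> ^ 2" unfolding z_def by (rule c2_sq_add[OF h2])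
      ultimately have "z ^ q + z ^ 2 = w ^ q + w ^ 2 + (\<omega> + \<omega> ^ 2)" using omq
        by (simp add: algebra_simps)
      also have "\<dots> = 1 + w ^ 2 + (c * w) * w ^ q" using oms cw by (simp add: algebra_simps)
      also have "(c * w) * w ^ q = c * w ^ (q + 1)" by (simp add: power_add algebra_simps)
      finally show ?thesis using w0 by blast
    next
      case False
      then obtain m where km: "k = 2 * m + 1" by (metis oddE)
      have m1: "m \<ge> 1" using k km by simp
      interpret oddcase k m \<omega>
        by unfold_locales (use h2 Q km m1 om in auto)
      have "q = 2 * 4 ^ m" using q km by (simp add: power_mult)
      thus ?thesis using odd_main[of c] by simp
    qed
  qed
  then obtain w z where w0: "w \<noteq> 0" and eq: "z ^ q + z ^ 2 = 1 + w ^ 2 + c * w ^ (q + 1)" by blast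
  have "z / w + 1 / w \<noteq> z / w" using w0 by simp
  moreover have "(z/w + 1/w) ^ (q + 2) + (z/w + 1/w) ^ q + c * (z/w + 1/w)
       = (z/w) ^ (q + 2) + (z/w) ^ q + c * (z/w)"
    by (rule collision[OF h2 q w0 eq])
  ultimately show ?thesis by blast
qed

theorem lemma2p4:
  fixes b c :: "'a :: {field, finite}" and q k :: nat
  assumes "q = 2 ^ k" and "k > 1" and "card (UNIV :: 'a set) = q ^ 2" and "b \<noteq> 0"
  shows "\<not> bij (\<lambda>x::'a. x ^ (q + 2) + b * x ^ q + c * x)"
proof
  assume bj: "bij (\<lambda>x::'a. x ^ (q + 2) + b * x ^ q + c * x)"
  have "((2::nat) ^ k) ^ 2 = (2 ^ 2) ^ k" by (simp only: power_mult[symmetric] mult.commute)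
  hence Q: "card (UNIV :: 'a set) = 4 ^ k" using assms(1,3) by simp
  have "even (card (UNIV :: 'a set))" using Q assms(2) by simp
  hence h2: "(2::'a) = 0" by (rule ff_char2)
  obtain \<beta> where be: "\<beta> ^ 2 = b" using c2_sqrt[OF h2] by blast
  have b0: "\<beta> \<noteq> 0" using be assms(4) by auto
  define \<gamma> where "\<gamma> = c / \<beta> ^ (q + 1)"
  obtain x y :: 'a where xy: "x \<noteq> y" and g: "x ^ (q + 2) + x ^ q + \<gamma> * x = y ^ (q + 2) + y ^ q + \<gamma> * y"
    using main_b1[OF h2 Q assms(2) assms(1)] by blast
  have fg: "(\<beta> * t) ^ (q + 2) + b * (\<beta> * t) ^ q + c * (\<beta> * t)
        = \<beta> ^ (q + 2) * (t ^ (q + 2) + t ^ q + \<gamma> * t)" for t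
  proof -
    have e1: "c * (\<beta> * t) = \<beta> ^ (q + 2) * (\<gamma> * t)"
      using b0 by (simp add: \<gamma>_def power_add field_simps)
    have e2: "b * (\<beta> * t) ^ q = \<beta> ^ (q + 2) * t ^ q"
      using be by (simp add: power_add power_mult_distrib power2_eq_square algebra_simps)
    have e0: "(\<beta> * t) ^ (q + 2) = \<beta> ^ (q + 2) * t ^ (q + 2)" by (rule power_mult_distrib)
    show ?thesis unfolding e0 e1 e2 by (simp only: distrib_left)
  qed
  have ne: "\<beta> * x \<noteq> \<beta> * y" using xy b0 by simp
  have eqf: "(\<beta> * x) ^ (q + 2) + b * (\<beta> * x) ^ q + c * (\<beta> * x)
      = (\<beta> * y) ^ (q + 2) + b * (\<beta> * y) ^ q + c * (\<beta> * y)"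
  proof -
    have "(\<beta> * x) ^ (q + 2) + b * (\<beta> * x) ^ q + c * (\<beta> * x)
        = \<beta> ^ (q + 2) * (x ^ (q + 2) + x ^ q + \<gamma> * x)" by (rule fg)
    also have "\<dots> = \<beta> ^ (q + 2) * (y ^ (q + 2) + y ^ q + \<gamma> * y)" by (simp only: g)
    also have "\<dots> = (\<beta> * y) ^ (q + 2) + b * (\<beta> * y) ^ q + c * (\<beta> * y)" by (rule fg[symmetric])
    finally show ?thesis .
  qed
  have "inj (\<lambda>x::'a. x ^ (q + 2) + b * x ^ q + c * x)" using bj by (rule bij_is_inj)
  hence "\<beta> * x = \<beta> * y" using eqf by (rule injD)
  thus False using ne by contradiction
qed

end
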